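(* Let $n\ge2$ and let $P_n$ be the path on $n$ vertices. There exist pairs of vertices $\{a,b\}\neq\{c,d\}$ of $P_n$, at least one of which is an edge, such that there is perfect plus state transfer between $e_a+e_b$ and $e_c+e_d$ in $P_n$, if and only if $n\in\{3,4\}$.
   Context: For a graph with adjacency matrix $A$ and degree matrix $\Delta$, the unsigned Laplacian is $L_+=\Delta+A$. Perfect plus state transfer between $e_a+e_b$ and $e_c+e_d$ means $\exp(itL_+)(e_a+e_b)=\gamma(e_c+e_d)$ for some $t\ge0$ and $\gamma\in\mathbb{C}$, $|\gamma|=1$, where $e_v$ is the standard basis vector of $v$. *)

theory Defs
  imports Complex_Main
begin

text \<open>Graphs on the vertex set {0..<n}, given by a symmetric adjacency predicate.
  Square matrices of size n are functions nat => nat => complex, only entries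
  with indices < n are meaningful.\<close>

definition path_adj :: "nat \<Rightarrow> nat \<Rightarrow> nat \<Rightarrow> bool" where
  "path_adj n i j \<longleftrightarrow> i < n \<and> j < n \<and> (i + 1 = j \<or> j + 1 = i)"

definition degree :: "nat \<Rightarrow> (nat \<Rightarrow> nat \<Rightarrow> bool) \<Rightarrow> nat \<Rightarrow> nat" where
  "degree n adj i = card {j. j < n \<and> adj i j}"

definition unsigned_laplacian :: "nat \<Rightarrow> (nat \<Rightarrow> nat \<Rightarrow> bool) \<Rightarrow> nat \<Rightarrow> nat \<Rightarrow> complex" where
  "unsigned_laplacian n adj i j =
     (if i = j then of_nat (degree n adj i) else 0) + (if adj i j then 1 else 0)"

definition mat_mult :: "nat \<Rightarrow> (nat \<Rightarrow> nat \<Rightarrow> complex) \<Rightarrow> (nat \<Rightarrow> nat \<Rightarrow> complex) \<Rightarrow> nat \<Rightarrow> nat \<Rightarrow> complex" where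
  "mat_mult n A B i j = (\<Sum>l<n. A i l * B l j)"

fun mat_pow :: "nat \<Rightarrow> (nat \<Rightarrow> nat \<Rightarrow> complex) \<Rightarrow> nat \<Rightarrow> nat \<Rightarrow> nat \<Rightarrow> complex" where
  "mat_pow n A 0 = (\<lambda>i j. if i = j then 1 else 0)"
| "mat_pow n A (Suc k) = mat_mult n A (mat_pow n A k)"

definition mat_exp :: "nat \<Rightarrow> (nat \<Rightarrow> nat \<Rightarrow> complex) \<Rightarrow> nat \<Rightarrow> nat \<Rightarrow> complex" where
  "mat_exp n A i j = (\<Sum>k. mat_pow n A k i j / of_nat (fact k))"

definition mat_vec :: "nat \<Rightarrow> (nat \<Rightarrow> nat \<Rightarrow> complex) \<Rightarrow> (nat \<Rightarrow> complex) \<Rightarrow> nat \<Rightarrow> complex" where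
  "mat_vec n A v i = (\<Sum>j<n. A i j * v j)"

definition basis_vec :: "nat \<Rightarrow> nat \<Rightarrow> complex" where
  "basis_vec a i = (if i = a then 1 else 0)"

definition plus_pst :: "nat \<Rightarrow> (nat \<Rightarrow> nat \<Rightarrow> bool) \<Rightarrow> nat \<Rightarrow> nat \<Rightarrow> nat \<Rightarrow> nat \<Rightarrow> bool" where
  "plus_pst n adj a b c d \<longleftrightarrow>
     (\<exists>t::real. t \<ge> 0 \<and> (\<exists>\<gamma>::complex. cmod \<gamma> = 1 \<and>
        (\<forall>i<n. mat_vec n (mat_exp n (\<lambda>k l. \<i> * of_real t * unsigned_laplacian n adj k l))
                   (\<lambda>v. basis_vec a v + basis_vec b v) i
               = \<gamma> * (basis_vec c i + basis_vec d i))))"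

end

theory Submission
  imports Defs
begin

lemma mat_pow_bound:
  fixes M :: "nat \<Rightarrow> nat \<Rightarrow> complex" and n :: nat
  defines "B \<equiv> (\<Sum>i<n. \<Sum>j<n. cmod (M i j))"
  shows "i < n \<Longrightarrow> j < n \<Longrightarrow> cmod (mat_pow n M k i j) \<le> (real n * B) ^ k"
proof (induction k arbitrary: i j)
  case 0
  then show ?case by simp
next
  case (Suc k)
  have Mb: "cmod (M i l) \<le> B" if "l < n" for l
  proof -
    have "cmod (M i l) \<le> (\<Sum>j<n. cmod (M i j))"
      by (rule member_le_sum) (use that in auto)
    also have "\<dots> \<le> B" unfolding B_def
      by (rule member_le_sum[where f="\<lambda>i. \<Sum>j<n. cmod (M i j)"]) (use Suc in \<open>auto intro: sum_nonneg\<close>)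
    finally show ?thesis .
  qed
  have "cmod (mat_pow n M (Suc k) i j) = cmod (\<Sum>l<n. M i l * mat_pow n M k l j)"
    by (simp add: mat_mult_def)
  also have "\<dots> \<le> (\<Sum>l<n. cmod (M i l) * cmod (mat_pow n M k l j))"
    by (rule order_trans[OF norm_sum]) (simp add: norm_mult)
  also have "\<dots> \<le> (\<Sum>l<n. B * (real n * B) ^ k)"
    by (rule sum_mono, rule mult_mono) (use Mb Suc in \<open>auto simp: B_def intro!: sum_nonneg\<close>)
  also have "\<dots> = (real n * B) ^ Suc k" by simp
  finally show ?case .
qed

lemma mat_pow_summable:
  fixes M :: "nat \<Rightarrow> nat \<Rightarrow> complex"
  assumes "i < n" "j < n"
  shows "summable (\<lambda>k. mat_pow n M k i j / of_nat (fact k))"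
proof -
  define B where "B = (\<Sum>i<n. \<Sum>j<n. cmod (M i j))"
  show ?thesis
  proof (rule summable_comparison_test)
    show "summable (\<lambda>k. inverse (fact k) * (real n * B) ^ k)" by (rule summable_exp)
    show "\<exists>N. \<forall>k\<ge>N. norm (mat_pow n M k i j / of_nat (fact k)) \<le> inverse (fact k) * (real n * B) ^ k"
    proof (intro exI allI impI)
      fix k :: nat
      have "norm (mat_pow n M k i j / of_nat (fact k)) = cmod (mat_pow n M k i j) / fact k"
        by (simp add: norm_divide)
      also have "\<dots> \<le> (real n * B) ^ k / fact k"
        by (rule divide_right_mono) (use mat_pow_bound[of i n j M k] assms B_def in auto)
      finally show "norm (mat_pow n M k i j / of_nat (fact k)) \<le> inverse (fact k) * (real n * B) ^ k"
        by (simp add: field_simps)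
    qed
  qed
qed

lemma exp_sums_complex: "(\<lambda>k. (\<mu>::complex) ^ k / of_nat (fact k)) sums exp \<mu>"
proof -
  have "(\<lambda>k. \<mu> ^ k /\<^sub>R fact k) sums exp \<mu>" by (rule exp_converges)
  moreover have "(\<lambda>k. \<mu> ^ k /\<^sub>R fact k) = (\<lambda>k. \<mu> ^ k / of_nat (fact k))"
    by (simp add: scaleR_conv_of_real field_simps)
  ultimately show ?thesis by simp
qed

lemma mat_vec_exp_series:
  fixes M :: "nat \<Rightarrow> nat \<Rightarrow> complex"
  assumes "i < n"
  shows "(\<lambda>k. (\<Sum>j<n. mat_pow n M k i j * v j) / of_nat (fact k)) sums mat_vec n (mat_exp n M) v i"
proof -
  have "(\<lambda>k. \<Sum>j<n. mat_pow n M k i j / of_nat (fact k) * v j) sums (\<Sum>j<n. mat_exp n M i j * v j)"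
  proof (rule sums_sum)
    fix j assume "j \<in> {..<n}"
    then have "(\<lambda>k. mat_pow n M k i j / of_nat (fact k)) sums mat_exp n M i j"
      unfolding mat_exp_def using mat_pow_summable[of i n j M] assms
      by (simp add: summable_sums)
    then show "(\<lambda>k. mat_pow n M k i j / of_nat (fact k) * v j) sums (mat_exp n M i j * v j)"
      by (rule sums_mult2)
  qed
  then show ?thesis
    by (simp add: mat_vec_def sum_divide_distrib field_simps)
qed

lemma mat_exp_right_eig:
  fixes M :: "nat \<Rightarrow> nat \<Rightarrow> complex"
  assumes ev: "\<And>i. i < n \<Longrightarrow> (\<Sum>l<n. M i l * v l) = \<mu> * v i"
  and "i < n"
  shows "mat_vec n (mat_exp n M) v i = exp \<mu> * v i"
proof -
  have P: "i < n \<Longrightarrow> (\<Sum>j<n. mat_pow n M k i j * v j) = \<mu> ^ k * v i" for k i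
  proof (induction k arbitrary: i)
    case 0
    then show ?case by (simp add: if_distrib[where f="\<lambda>a. a * _"] cong: if_cong)
  next
    case (Suc k)
    have "(\<Sum>j<n. mat_pow n M (Suc k) i j * v j) = (\<Sum>j<n. \<Sum>l<n. M i l * mat_pow n M k l j * v j)"
      by (simp add: mat_mult_def sum_distrib_right)
    also have "\<dots> = (\<Sum>l<n. M i l * (\<Sum>j<n. mat_pow n M k l j * v j))"
      by (subst sum.swap) (simp add: sum_distrib_left mult.assoc)
    also have "\<dots> = (\<Sum>l<n. M i l * v l) * \<mu> ^ k"
      using Suc by (simp add: sum_distrib_right sum_distrib_left mult_ac)
    also have "\<dots> = \<mu> ^ Suc k * v i" using ev Suc by simp
    finally show ?case .
  qed
  have "(\<lambda>k. (\<Sum>j<n. mat_pow n M k i j * v j) / of_nat (fact k)) sums mat_vec n (mat_exp n M) v i"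
    by (rule mat_vec_exp_series) fact
  moreover have "(\<lambda>k. (\<Sum>j<n. mat_pow n M k i j * v j) / of_nat (fact k)) sums (exp \<mu> * v i)"
    using sums_mult2[OF exp_sums_complex[of \<mu>], of "v i"] P[OF assms(2)]
    by (simp add: field_simps)
  ultimately show ?thesis using sums_unique2 by blast
qed

lemma mat_exp_left_eig:
  fixes M :: "nat \<Rightarrow> nat \<Rightarrow> complex"
  assumes ev: "\<And>j. j < n \<Longrightarrow> (\<Sum>i<n. w i * M i j) = \<mu> * w j"
  shows "(\<Sum>i<n. w i * mat_vec n (mat_exp n M) x i) = exp \<mu> * (\<Sum>j<n. w j * x j)"
proof -
  have P: "j < n \<Longrightarrow> (\<Sum>i<n. w i * mat_pow n M k i j) = \<mu> ^ k * w j" for k j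
  proof (induction k arbitrary: j)
    case 0
    then show ?case by (simp add: if_distrib cong: if_cong)
  next
    case (Suc k)
    have "(\<Sum>i<n. w i * mat_pow n M (Suc k) i j) = (\<Sum>i<n. \<Sum>l<n. w i * M i l * mat_pow n M k l j)"
      by (simp add: mat_mult_def sum_distrib_left mult.assoc)
    also have "\<dots> = (\<Sum>l<n. (\<Sum>i<n. w i * M i l) * mat_pow n M k l j)"
      by (subst sum.swap) (simp add: sum_distrib_right)
    also have "\<dots> = (\<Sum>l<n. w l * mat_pow n M k l j) * \<mu>"
      using ev by (simp add: sum_distrib_right sum_distrib_left mult_ac)
    also have "\<dots> = \<mu> ^ Suc k * w j" using Suc by simp
    finally show ?case .
  qed
  have S: "(\<lambda>k. \<Sum>i<n. w i * ((\<Sum>j<n. mat_pow n M k i j * x j) / of_nat (fact k)))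
           sums (\<Sum>i<n. w i * mat_vec n (mat_exp n M) x i)"
    by (rule sums_sum, rule sums_mult, rule mat_vec_exp_series) auto
  have "(\<lambda>k. \<Sum>i<n. w i * ((\<Sum>j<n. mat_pow n M k i j * x j) / of_nat (fact k)))
        = (\<lambda>k. (\<mu> ^ k / of_nat (fact k)) * (\<Sum>j<n. w j * x j))"
  proof
    fix k
    have "(\<Sum>i<n. w i * ((\<Sum>j<n. mat_pow n M k i j * x j) / of_nat (fact k)))
        = (\<Sum>j<n. (\<Sum>i<n. w i * mat_pow n M k i j) * x j) / of_nat (fact k)"
      by (simp add: sum_divide_distrib sum_distrib_left sum_distrib_right mult_ac)
         (subst sum.swap, simp)
    also have "\<dots> = (\<mu> ^ k / of_nat (fact k)) * (\<Sum>j<n. w j * x j)"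
      using P by (simp add: sum_distrib_left sum_divide_distrib mult_ac)
    finally show "(\<Sum>i<n. w i * ((\<Sum>j<n. mat_pow n M k i j * x j) / of_nat (fact k)))
        = (\<mu> ^ k / of_nat (fact k)) * (\<Sum>j<n. w j * x j)" .
  qed
  with S have "(\<lambda>k. (\<mu> ^ k / of_nat (fact k)) * (\<Sum>j<n. w j * x j)) sums (\<Sum>i<n. w i * mat_vec n (mat_exp n M) x i)"
    by simp
  moreover have "(\<lambda>k. (\<mu> ^ k / of_nat (fact k)) * (\<Sum>j<n. w j * x j)) sums (exp \<mu> * (\<Sum>j<n. w j * x j))"
    by (rule sums_mult2[OF exp_sums_complex])
  ultimately show ?thesis using sums_unique2 by blast
qed


definition Lr :: "nat \<Rightarrow> nat \<Rightarrow> nat \<Rightarrow> real" where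
  "Lr n i j = (if i = j then real (degree n (path_adj n) i) else 0) + (if path_adj n i j then 1 else 0)"

lemma ul_Lr: "unsigned_laplacian n (path_adj n) i j = of_real (Lr n i j)"
  by (simp add: unsigned_laplacian_def Lr_def)

lemma Lr_sym: "Lr n i j = Lr n j i"
  by (auto simp: Lr_def path_adj_def)

lemma nbr_set: "i < n \<Longrightarrow> {j. j < n \<and> path_adj n i j} =
   (if 0 < i then {i - 1} else {}) \<union> (if i + 1 < n then {i + 1} else {})"
  by (auto simp: path_adj_def)

lemma deg_path: "i < n \<Longrightarrow> degree n (path_adj n) i = (if 0 < i then 1 else 0) + (if i + 1 < n then 1 else 0)"
  unfolding degree_def by (subst nbr_set) (auto simp: card_insert_if)

lemma row_Lr:
  assumes "i < n"
  shows "(\<Sum>l<n. Lr n i l * f l) = real (degree n (path_adj n) i) * f i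
          + (if 0 < i then f (i - 1) else 0) + (if i + 1 < n then f (i + 1) else 0)"
proof -
  have "(\<Sum>l<n. Lr n i l * f l) = (\<Sum>l<n. (if i = l then real (degree n (path_adj n) i) * f l else 0))
        + (\<Sum>l<n. (if path_adj n i l then f l else 0))"
    by (simp add: Lr_def distrib_right sum.distrib if_distrib[where f="\<lambda>a. a * _"] cong: if_cong)
  also have "(\<Sum>l<n. (if i = l then real (degree n (path_adj n) i) * f l else 0)) = real (degree n (path_adj n) i) * f i"
    using assms by simp
  also have "(\<Sum>l<n. (if path_adj n i l then f l else 0)) = sum f {l. l < n \<and> path_adj n i l}"
    by (simp add: sum.If_cases Int_def lessThan_def conj_commute)
  also have "\<dots> = (if 0 < i then f (i - 1) else 0) + (if i + 1 < n then f (i + 1) else 0)"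
    using assms by (subst nbr_set) auto
  finally show ?thesis by simp
qed

definition Xa :: "nat \<Rightarrow> nat \<Rightarrow> nat \<Rightarrow> real" where
  "Xa n k i = real k * (2 * real i + 1) * pi / (2 * real n)"

definition wv :: "nat \<Rightarrow> nat \<Rightarrow> nat \<Rightarrow> real" where
  "wv n k i = (-1) ^ i * cos (Xa n k i)"

definition lam :: "nat \<Rightarrow> nat \<Rightarrow> real" where
  "lam n k = 2 - 2 * cos (real k * pi / real n)"

lemma cos_kpi_sym: "cos (real k * pi + y) = cos (real k * pi - y)"
  by (simp add: cos_add cos_diff)

lemma wv_eig:
  assumes "i < n"
  shows "(\<Sum>l<n. Lr n i l * wv n k l) = lam n k * wv n k i"
proof -
  define h where "h = real k * pi / real n"
  define X where "X = Xa n k i"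
  have n0: "real n > 0" using assms by simp
  have A: "(if 0 < i then 1 else 0) * wv n k i + (if 0 < i then wv n k (i - 1) else 0)
        = (-1) ^ i * (cos X - cos (X - h))"
  proof (cases "i = 0")
    case True
    then have "X - h = - X" unfolding X_def h_def Xa_def using n0 by (simp add: field_simps)
    then have "cos (X - h) = cos X" by (metis cos_minus)
    then show ?thesis using True by simp
  next
    case False
    then have e: "Xa n k (i - 1) = X - h" unfolding X_def h_def Xa_def using n0
      by (simp add: of_nat_diff field_simps)
    have sg: "(-1::real) ^ (i - 1) = - ((-1) ^ i)" using False
      by (cases i) auto
    have "wv n k (i - 1) = - ((-1) ^ i * cos (X - h))"
      unfolding wv_def e sg by simp
    moreover have "wv n k i = (-1) ^ i * cos X" unfolding wv_def X_def by simp
    ultimately show ?thesis using False by (simp add: algebra_simps)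
  qed
  have B: "(if i + 1 < n then 1 else 0) * wv n k i + (if i + 1 < n then wv n k (i + 1) else 0)
        = (-1) ^ i * (cos X - cos (X + h))"
  proof (cases "i + 1 < n")
    case False
    then have "i = n - 1" using assms by simp
    then have e1: "X = real k * pi - h/2" and e2: "X + h = real k * pi + h/2"
      unfolding X_def h_def Xa_def using n0 assms by (simp_all add: of_nat_diff field_simps)
    have "cos (X + h) = cos (real k * pi + h/2)" by (simp only: e2)
    also have "\<dots> = cos (real k * pi - h/2)" by (rule cos_kpi_sym)
    also have "\<dots> = cos X" by (simp only: e1)
    finally have "cos (X + h) = cos X" .
    then show ?thesis using False by simp
  next
    case True
    then have "Xa n k (i + 1) = X + h" unfolding X_def h_def Xa_def using n0
      by (simp add: field_simps)
    then show ?thesis using True unfolding wv_def X_def by (simp add: algebra_simps)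
  qed
  have "(\<Sum>l<n. Lr n i l * wv n k l) = real (degree n (path_adj n) i) * wv n k i
          + (if 0 < i then wv n k (i - 1) else 0) + (if i + 1 < n then wv n k (i + 1) else 0)"
    by (rule row_Lr) fact
  also have "\<dots> = ((if 0 < i then 1 else 0) * wv n k i + (if 0 < i then wv n k (i - 1) else 0))
     + ((if i + 1 < n then 1 else 0) * wv n k i + (if i + 1 < n then wv n k (i + 1) else 0))"
    using assms by (simp add: deg_path algebra_simps)
  also have "\<dots> = (-1) ^ i * (2 * cos X - (cos (X - h) + cos (X + h)))"
    unfolding A B by (simp add: algebra_simps)
  also have "cos (X - h) + cos (X + h) = 2 * cos X * cos h"
    by (simp add: cos_add cos_diff)
  finally show ?thesis unfolding lam_def wv_def X_def h_def by (simp add: algebra_simps)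
qed


lemma sumcos:
  fixes n m :: nat
  assumes "0 < m" "m < 2 * n"
  shows "(\<Sum>k<n. cos (real k * (real m * pi / real n))) = (if even m then 0 else 1)"
proof -
  define \<phi> where "\<phi> = real m * pi / real n"
  have n0: "real n > 0" using assms by simp
  have s0: "sin (\<phi> / 2) \<noteq> 0"
  proof -
    have "0 < \<phi> / 2" using assms n0 unfolding \<phi>_def by simp
    moreover have "\<phi> / 2 < pi" using assms n0 unfolding \<phi>_def
      by (simp add: field_simps)
    ultimately have "0 < sin (\<phi> / 2)" by (rule sin_gt_zero)
    then show ?thesis by simp
  qed
  define g where "g k = sin ((2 * real k - 1) * \<phi> / 2)" for k :: nat
  have step: "2 * sin (\<phi> / 2) * cos (real k * \<phi>) = g (Suc k) - g k" for k
    unfolding g_def by (subst sin_diff_sin) (simp add: algebra_simps add_divide_distrib diff_divide_distrib)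
  have "2 * sin (\<phi> / 2) * (\<Sum>k<n. cos (real k * \<phi>)) = (\<Sum>k<n. g (Suc k) - g k)"
    by (simp add: sum_distrib_left step[symmetric] mult.assoc)
  also have "\<dots> = g n - g 0" by (rule sum_lessThan_telescope)
  also have "g n = sin (real m * pi - \<phi> / 2)"
    unfolding g_def \<phi>_def using n0 by (simp add: field_simps)
  also have "\<dots> = - ((-1) ^ m * sin (\<phi> / 2))"
    by (simp add: sin_diff)
  also have "g 0 = - sin (\<phi> / 2)" unfolding g_def by simp
  finally have "2 * sin (\<phi> / 2) * (\<Sum>k<n. cos (real k * \<phi>)) = (1 - (-1) ^ m) * sin (\<phi> / 2)"
    by (simp add: algebra_simps)
  then have "sin (\<phi> / 2) * (2 * (\<Sum>k<n. cos (real k * \<phi>))) = sin (\<phi> / 2) * (1 - (-1) ^ m)"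
    by (simp add: algebra_simps)
  then have "2 * (\<Sum>k<n. cos (real k * \<phi>)) = 1 - (-1) ^ m"
    using s0 mult_left_cancel by blast
  then have "(\<Sum>k<n. cos (real k * \<phi>)) = (1 - (-1) ^ m) / 2"
    by simp
  then show ?thesis unfolding \<phi>_def by (cases "even m") auto
qed

definition eps :: "nat \<Rightarrow> real" where "eps k = (if k = 0 then 1 else 2)"

lemma eps_sum: "0 < n \<Longrightarrow> (\<Sum>k<n. eps k * F k) = 2 * (\<Sum>k<n. F k) - F 0"
proof -
  assume "0 < n"
  then have "(\<Sum>k<n. eps k * F k) = eps 0 * F 0 + (\<Sum>k\<in>{..<n} - {0}. eps k * F k)"
    "(\<Sum>k<n. F k) = F 0 + (\<Sum>k\<in>{..<n} - {0}. F k)"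
    by (simp_all add: sum.remove)
  moreover have "(\<Sum>k\<in>{..<n} - {0}. eps k * F k) = 2 * (\<Sum>k\<in>{..<n} - {0}. F k)"
    by (simp add: eps_def sum_distrib_left)
  ultimately show ?thesis by (simp add: eps_def)
qed

lemma compl_aux:
  assumes "j < i" "i < n"
  shows "(\<Sum>k<n. eps k * (cos (Xa n k i) * cos (Xa n k j))) = 0"
proof -
  have n0: "real n > 0" using assms by simp
  have pt: "2 * (cos (Xa n k i) * cos (Xa n k j)) =
      cos (real k * (real (i - j) * pi / real n)) + cos (real k * (real (i + j + 1) * pi / real n))" for k
  proof -
    have "Xa n k i - Xa n k j = real k * (real (i - j) * pi / real n)"
      unfolding Xa_def using assms n0 by (simp add: of_nat_diff field_simps)
    moreover have "Xa n k i + Xa n k j = real k * (real (i + j + 1) * pi / real n)"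
      unfolding Xa_def using assms n0 by (simp add: field_simps)
    ultimately show ?thesis by (simp add: cos_times_cos)
  qed
  have "2 * (\<Sum>k<n. cos (Xa n k i) * cos (Xa n k j)) =
        (\<Sum>k<n. cos (real k * (real (i - j) * pi / real n))) + (\<Sum>k<n. cos (real k * (real (i + j + 1) * pi / real n)))"
    by (simp add: sum_distrib_left pt sum.distrib)
  also have "\<dots> = (if even (i - j) then 0 else 1) + (if even (i + j + 1) then 0 else 1)"
  proof -
    have s1: "(\<Sum>k<n. cos (real k * (real (i - j) * pi / real n))) = (if even (i - j) then 0 else 1)"
      by (rule sumcos) (use assms in auto)
    have s2: "(\<Sum>k<n. cos (real k * (real (i + j + 1) * pi / real n))) = (if even (i + j + 1) then 0 else 1)"
      by (rule sumcos) (use assms in auto)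
    show ?thesis by (simp only: s1 s2)
  qed
  also have "\<dots> = 1"
  proof -
    have "i - j + (i + j + 1) = 2 * i + 1" using assms by simp
    then have "odd (i - j + (i + j + 1))" by simp
    then show ?thesis by auto
  qed
  finally show ?thesis using assms by (subst eps_sum) (auto simp: Xa_def)
qed

lemma compl:
  assumes "i < n" "j < n"
  shows "(\<Sum>k<n. eps k * wv n k i * wv n k j) = (if i = j then real n else 0)"
proof -
  have wv2: "eps k * wv n k i * wv n k j = (-1) ^ (i + j) * (eps k * (cos (Xa n k i) * cos (Xa n k j)))" for k
    by (simp add: wv_def power_add)
  have "(\<Sum>k<n. eps k * wv n k i * wv n k j) = (-1) ^ (i + j) * (\<Sum>k<n. eps k * (cos (Xa n k i) * cos (Xa n k j)))"
    by (simp add: wv2 sum_distrib_left)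
  moreover
  have "(\<Sum>k<n. eps k * (cos (Xa n k i) * cos (Xa n k j))) = (if i = j then real n else 0)"
  proof (cases "i = j")
    case True
    have n0: "real n > 0" using assms by simp
    have pt: "2 * (cos (Xa n k i) * cos (Xa n k i)) = 1 + cos (real k * (real (i + i + 1) * pi / real n))" for k
    proof -
      have "Xa n k i + Xa n k i = real k * (real (i + i + 1) * pi / real n)"
        unfolding Xa_def using assms n0 by (simp add: field_simps)
      then show ?thesis by (simp add: cos_times_cos)
    qed
    have "2 * (\<Sum>k<n. cos (Xa n k i) * cos (Xa n k i)) = real n + (\<Sum>k<n. cos (real k * (real (i + i + 1) * pi / real n)))"
      by (simp add: sum_distrib_left pt sum.distrib)
    also have "\<dots> = real n + 1"
    proof -
      have s2: "(\<Sum>k<n. cos (real k * (real (i + i + 1) * pi / real n))) = (if even (i + i + 1) then 0 else 1)"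
        by (rule sumcos) (use assms in auto)
      show ?thesis by (simp only: s2) simp
    qed
    finally show ?thesis using True assms by (subst eps_sum) (auto simp: Xa_def)
  next
    case False
    then show ?thesis
    proof (cases "j < i")
      case True
      then show ?thesis using compl_aux[OF True assms(1)] by simp
    next
      case False
      then have "i < j" using \<open>i \<noteq> j\<close> by simp
      then show ?thesis using compl_aux[OF _ assms(2), of i] \<open>i \<noteq> j\<close> by (simp add: mult.commute)
    qed
  qed
  ultimately show ?thesis by simp
qed

lemma Lr_rep:
  assumes "i < n" "j < n"
  shows "(\<Sum>k<n. eps k * lam n k * wv n k i * wv n k j) = real n * Lr n i j"
proof -
  have "(\<Sum>k<n. eps k * lam n k * wv n k i * wv n k j) = (\<Sum>k<n. eps k * wv n k i * (\<Sum>l<n. Lr n j l * wv n k l))"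
    using wv_eig[OF assms(2)] by (simp add: mult_ac)
  also have "\<dots> = (\<Sum>l<n. Lr n j l * (\<Sum>k<n. eps k * wv n k i * wv n k l))"
    by (simp add: sum_distrib_left sum_distrib_right mult_ac) (subst sum.swap, simp)
  also have "\<dots> = (\<Sum>l<n. Lr n j l * (if i = l then real n else 0))"
    using assms by (intro sum.cong) (auto simp: compl)
  also have "\<dots> = real n * Lr n j i" using assms by (simp add: if_distrib cong: if_cong)
  finally show ?thesis by (simp add: Lr_sym)
qed


lemma left_ev:
  assumes "j < n"
  shows "(\<Sum>i<n. of_real (wv n k i) * (\<i> * of_real t * unsigned_laplacian n (path_adj n) i j))
         = (\<i> * of_real (t * lam n k)) * of_real (wv n k j)"
proof -
  have "(\<Sum>i<n. of_real (wv n k i) * (\<i> * of_real t * unsigned_laplacian n (path_adj n) i j))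
      = \<i> * of_real t * of_real (\<Sum>i<n. Lr n j i * wv n k i)"
    by (simp add: ul_Lr sum_distrib_left Lr_sym[of n _ j] mult_ac)
  also have "(\<Sum>i<n. Lr n j i * wv n k i) = lam n k * wv n k j" by (rule wv_eig) fact
  finally show ?thesis by (simp add: mult_ac)
qed

lemma sum_basis2:
  assumes "a < n" "b < n" "a \<noteq> b"
  shows "(\<Sum>j<n. of_real (f j) * (basis_vec a j + basis_vec b j)) = (of_real (f a + f b) :: complex)"
  using assms by (simp add: basis_vec_def distrib_left sum.distrib if_distrib[where f="\<lambda>x. _ * x"] cong: if_cong)

lemma pst_coef_path:
  assumes "a < n" "b < n" "c < n" "d < n" "a \<noteq> b" "c \<noteq> d"
  and t: "\<forall>i<n. mat_vec n (mat_exp n (\<lambda>k l. \<i> * of_real t * unsigned_laplacian n (path_adj n) k l))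
             (\<lambda>v. basis_vec a v + basis_vec b v) i = \<gamma> * (basis_vec c i + basis_vec d i)"
  shows "exp (\<i> * of_real (t * lam n k)) * of_real (wv n k a + wv n k b) = \<gamma> * of_real (wv n k c + wv n k d)"
proof -
  let ?M = "\<lambda>k l. \<i> * of_real t * unsigned_laplacian n (path_adj n) k l"
  let ?w = "\<lambda>i. (of_real (wv n k i) :: complex)"
  have "(\<Sum>i<n. ?w i * mat_vec n (mat_exp n ?M) (\<lambda>v. basis_vec a v + basis_vec b v) i)
      = exp (\<i> * of_real (t * lam n k)) * (\<Sum>j<n. ?w j * (basis_vec a j + basis_vec b j))"
    by (rule mat_exp_left_eig) (rule left_ev)
  also have "(\<Sum>j<n. ?w j * (basis_vec a j + basis_vec b j)) = of_real (wv n k a + wv n k b)"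
    by (rule sum_basis2) fact+
  finally have 1: "(\<Sum>i<n. ?w i * mat_vec n (mat_exp n ?M) (\<lambda>v. basis_vec a v + basis_vec b v) i)
      = exp (\<i> * of_real (t * lam n k)) * of_real (wv n k a + wv n k b)" .
  have "(\<Sum>i<n. ?w i * mat_vec n (mat_exp n ?M) (\<lambda>v. basis_vec a v + basis_vec b v) i)
       = (\<Sum>i<n. ?w i * (\<gamma> * (basis_vec c i + basis_vec d i)))"
    using t by simp
  also have "\<dots> = \<gamma> * (\<Sum>i<n. ?w i * (basis_vec c i + basis_vec d i))"
    by (simp add: sum_distrib_left mult_ac)
  also have "(\<Sum>i<n. ?w i * (basis_vec c i + basis_vec d i)) = of_real (wv n k c + wv n k d)"
    by (rule sum_basis2) fact+
  finally show ?thesis using 1 by simp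
qed

lemma abs_eq_from_coef:
  assumes "exp (\<i> * of_real (s::real)) * of_real (p::real) = \<gamma> * of_real q" "cmod \<gamma> = 1"
  shows "\<bar>p\<bar> = \<bar>q\<bar>"
proof -
  have "cmod (exp (\<i> * of_real s) * of_real p) = cmod (\<gamma> * of_real q)" using assms by simp
  moreover have "exp (\<i> * of_real s) = cis s" by (simp add: cis_conv_exp)
  ultimately show ?thesis using assms by (simp add: norm_mult)
qed

definition Qf :: "nat \<Rightarrow> nat \<Rightarrow> nat \<Rightarrow> real" where
  "Qf n a b = Lr n a a + Lr n b b + 2 * Lr n a b"

lemma Q_rep:
  assumes "a < n" "b < n"
  shows "(\<Sum>k<n. eps k * lam n k * (wv n k a + wv n k b)^2) = real n * Qf n a b"
proof -
  have "(\<Sum>k<n. eps k * lam n k * (wv n k a + wv n k b)^2) =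
     (\<Sum>k<n. eps k * lam n k * wv n k a * wv n k a) + (\<Sum>k<n. eps k * lam n k * wv n k b * wv n k b)
     + 2 * (\<Sum>k<n. eps k * lam n k * wv n k a * wv n k b)"
    by (simp add: power2_eq_square sum.distrib sum_distrib_left algebra_simps)
  also have "\<dots> = real n * Qf n a b"
    using Lr_rep[of a n a] Lr_rep[of b n b] Lr_rep[of a n b] assms by (simp add: Qf_def algebra_simps)
  finally show ?thesis .
qed

lemma Q_eq:
  assumes "a < n" "b < n" "c < n" "d < n" "cmod \<gamma> = 1"
  and co: "\<And>k. exp (\<i> * of_real (t * lam n k)) * of_real (wv n k a + wv n k b) = \<gamma> * of_real (wv n k c + wv n k d)"
  shows "Qf n a b = Qf n c d"
proof -
  have "(wv n k a + wv n k b)^2 = (wv n k c + wv n k d)^2" for k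
    using abs_eq_from_coef[OF co assms(5)] by (metis power2_abs)
  then have "real n * Qf n a b = real n * Qf n c d"
    using Q_rep[of a n b] Q_rep[of c n d] assms by simp
  then show ?thesis using assms by simp
qed

lemma Qf_val:
  assumes "a < n" "b < n" "a \<noteq> b" "3 \<le> n"
  shows "path_adj n a b \<Longrightarrow> Qf n a b \<ge> 5"
    and "\<not> path_adj n a b \<Longrightarrow> Qf n a b \<le> 4"
proof -
  have d: "Lr n i i = (if 0 < i then 1 else 0) + (if i + 1 < n then 1 else 0)" if "i < n" for i
    using that by (simp add: Lr_def deg_path path_adj_def)
  have o: "Lr n a b = (if path_adj n a b then 1 else 0)" using assms by (simp add: Lr_def)
  show "path_adj n a b \<Longrightarrow> Qf n a b \<ge> 5"
    using assms unfolding Qf_def o by (auto simp: d path_adj_def)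
  show "\<not> path_adj n a b \<Longrightarrow> Qf n a b \<le> 4"
    using assms unfolding Qf_def o by (auto simp: d)
qed


lemma wv_edge:
  assumes "0 < n"
  shows "wv n k A + wv n k (A + 1) =
     (-1) ^ A * (2 * sin (real (A + 1) * real k * pi / real n) * sin (real k * pi / (2 * real n)))"
proof -
  have "wv n k A + wv n k (A + 1) = (-1) ^ A * (cos (Xa n k A) - cos (Xa n k (A + 1)))"
    by (simp add: wv_def algebra_simps)
  also have "cos (Xa n k A) - cos (Xa n k (A + 1)) =
      2 * sin ((Xa n k A + Xa n k (A + 1)) / 2) * sin ((Xa n k (A + 1) - Xa n k A) / 2)"
    by (rule cos_diff_cos)
  also have "(Xa n k A + Xa n k (A + 1)) / 2 = real (A + 1) * real k * pi / real n"
    unfolding Xa_def using assms by (simp add: field_simps)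
  also have "(Xa n k (A + 1) - Xa n k A) / 2 = real k * pi / (2 * real n)"
    unfolding Xa_def using assms by (simp add: field_simps)
  finally show ?thesis .
qed

lemma sin_eq_cases:
  fixes \<alpha> \<beta> :: real
  assumes "0 < \<alpha>" "\<alpha> < pi" "0 < \<beta>" "\<beta> < pi" "sin \<alpha> = sin \<beta>"
  shows "\<alpha> = \<beta> \<or> \<alpha> + \<beta> = pi"
proof -
  have "2 * sin ((\<alpha> - \<beta>) / 2) * cos ((\<alpha> + \<beta>) / 2) = 0"
    using assms(5) sin_diff_sin[of \<alpha> \<beta>] by simp
  then have "sin ((\<alpha> - \<beta>) / 2) = 0 \<or> cos ((\<alpha> + \<beta>) / 2) = 0" by simp
  then show ?thesis
  proof
    assume "sin ((\<alpha> - \<beta>) / 2) = 0"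
    then have "(\<alpha> - \<beta>) / 2 = 0"
      by (rule sin_eq_0_pi[rotated 2]) (use assms in auto)
    then show ?thesis by simp
  next
    assume "cos ((\<alpha> + \<beta>) / 2) = 0"
    then have "cos ((\<alpha> + \<beta>) / 2) = cos (pi / 2)" by simp
    then have "(\<alpha> + \<beta>) / 2 = pi / 2"
      by (rule cos_inj_pi[rotated 4]) (use assms in auto)
    then show ?thesis by simp
  qed
qed

lemma sin_mirror:
  assumes "0 < n" "C + 1 + (A + 1) = n"
  shows "sin (real (C + 1) * real k * pi / real n) = - ((-1) ^ k * sin (real (A + 1) * real k * pi / real n))"
proof -
  have e: "real (C + 1) = real n - real (A + 1)" using assms(2) by linarith
  have "real (C + 1) * real k * pi / real n = (real n - real (A + 1)) * real k * pi / real n"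
    by (simp only: e)
  also have "\<dots> = real k * pi - real (A + 1) * real k * pi / real n"
    using assms(1) by (simp add: field_simps)
  finally have "real (C + 1) * real k * pi / real n = real k * pi - real (A + 1) * real k * pi / real n" .
  then show ?thesis by (simp add: sin_diff)
qed

lemma sin_zero_dvd:
  assumes "0 < n" "sin (real m * pi / real n) = 0"
  shows "n dvd m"
proof -
  obtain i :: int where i: "real m * pi / real n = of_int i * pi"
    using assms(2) sin_zero_iff_int2 by blast
  then have "real m = of_int i * real n" using assms(1) by (simp add: field_simps)
  then have "int m = i * int n" by (metis of_int_eq_iff of_int_mult of_int_of_nat_eq)
  then have "int n dvd int m" by simp
  then show ?thesis by simp
qed

lemma sin_half_pos:
  assumes "0 < k" "k < 2 * n"
  shows "sin (real k * pi / (2 * real n)) > 0"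
  by (rule sin_gt_zero) (use assms in \<open>auto simp: field_simps\<close>)

lemma phase:
  assumes n0: "0 < n" and AC: "C + 1 + (A + 1) = n"
  and co: "exp (\<i> * of_real (t * lam n k)) * of_real (wv n k A + wv n k (A+1)) = \<gamma> * of_real (wv n k C + wv n k (C+1))"
  and k: "0 < k" "k < 2*n" "\<not> n dvd (A+1)*k"
  shows "exp (\<i> * of_real (t * lam n k)) = - \<gamma> * (-1)^(A+C) * (-1)^k"
proof -
  define s where "s = sin (real (A + 1) * real k * pi / real n)"
  define h where "h = sin (real k * pi / (2 * real n))"
  define E where "E = exp (\<i> * of_real (t * lam n k))"
  have s0: "s \<noteq> 0"
  proof
    assume "s = 0"
    moreover have "real ((A + 1) * k) = real (A + 1) * real k" by (simp only: of_nat_mult)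
    ultimately have "sin (real ((A + 1) * k) * pi / real n) = 0" unfolding s_def by metis
    then have "n dvd (A + 1) * k" by (rule sin_zero_dvd[OF n0])
    with k show False by simp
  qed
  have h0: "h \<noteq> 0" using sin_half_pos[OF k(1,2)] unfolding h_def by simp
  define X where "X = 2 * s * h"
  have X0: "X \<noteq> 0" using s0 h0 unfolding X_def by simp
  have l: "wv n k A + wv n k (A+1) = (-1)^A * X"
    unfolding X_def s_def h_def using wv_edge[OF n0] by (simp add: mult.assoc)
  have r: "wv n k C + wv n k (C+1) = - ((-1)^C * (-1)^k * X)"
    unfolding X_def s_def h_def using wv_edge[OF n0, of k C] sin_mirror[OF n0 AC, of k] by simp
  have "E * ((-1)^A * of_real X) = \<gamma> * (- ((-1)^C * (-1)^k * of_real X))"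
    using co unfolding E_def l r by simp
  then have "of_real X * (E * (-1)^A) = of_real X * (- \<gamma> * (-1)^C * (-1)^k)"
    by (simp add: mult_ac)
  moreover have "(of_real X :: complex) \<noteq> 0" using X0 by simp
  ultimately have "E * (-1)^A = - \<gamma> * (-1)^C * (-1)^k"
    using mult_left_cancel by blast
  then have "E * (-1)^A * (-1)^A = - \<gamma> * (-1)^C * (-1)^k * (-1)^A" by simp
  moreover have "(-1::complex)^A * (-1)^A = 1" by (simp add: power_add[symmetric])
  ultimately show ?thesis unfolding E_def by (simp add: power_add mult_ac)
qed

lemma pair_int:
  assumes k: "0 < k" "k < n"
  and e1: "exp (\<i> * of_real (t * lam n k)) = \<sigma> * (-1)^k"
  and e2: "exp (\<i> * of_real (t * lam n (n - k))) = \<sigma> * (-1)^(n - k)"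
  and s0: "\<sigma> \<noteq> 0"
  shows "\<exists>m::int. t * cos (real k * pi / real n) = of_int m * pi / 4"
proof -
  define c where "c = cos (real k * pi / real n)"
  have "real (n - k) * pi / real n = pi - real k * pi / real n"
    using k by (simp add: of_nat_diff field_simps)
  then have "lam n (n - k) = lam n k + 4 * c" unfolding lam_def c_def by simp
  then have "\<i> * of_real (t * lam n (n - k)) = \<i> * of_real (t * lam n k) + \<i> * of_real (4 * t * c)"
    by (simp add: algebra_simps)
  then have "exp (\<i> * of_real (t * lam n (n - k))) = exp (\<i> * of_real (t * lam n k)) * exp (\<i> * of_real (4 * t * c))"
    by (simp add: exp_add)
  then have "\<sigma> * (-1)^(n - k) = \<sigma> * (-1)^k * exp (\<i> * of_real (4 * t * c))"
    unfolding e1 e2 .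
  then have "\<sigma> * (-1)^(n - k) = \<sigma> * ((-1)^k * exp (\<i> * of_real (4 * t * c)))"
    by (simp add: mult.assoc)
  then have "(-1)^(n - k) = (-1)^k * exp (\<i> * of_real (4 * t * c))"
    using s0 mult_left_cancel by blast
  then have "(-1)^(n - k) * (-1)^k = (-1)^k * (-1)^k * exp (\<i> * of_real (4 * t * c))" by simp
  moreover have "(-1::complex)^(n - k) * (-1)^k = (-1)^n" using k by (simp add: power_add[symmetric])
  moreover have "(-1::complex)^k * (-1)^k = 1" by (simp add: power_add[symmetric])
  ultimately have F: "exp (\<i> * of_real (4 * t * c)) = (-1)^n" by simp
  have "exp (\<i> * of_real (8 * t * c)) = exp (\<i> * of_real (4 * t * c)) * exp (\<i> * of_real (4 * t * c))"
    by (simp add: exp_add[symmetric] algebra_simps)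
  also have "\<dots> = 1" unfolding F by (simp add: power_add[symmetric])
  finally have "cis (8 * t * c) = 1" by (simp add: cis_conv_exp)
  then have "cos (8 * t * c) = 1" by (metis complex.sel(1) cis.sel(1) one_complex.sel(1))
  then obtain m :: int where "8 * t * c = of_int m * 2 * pi" using cos_one_2pi_int by blast
  then have "t * c = of_int m * pi / 4" by (simp add: field_simps mult_ac)
  then show ?thesis unfolding c_def by blast
qed


lemma cheb_step:
  fixes \<theta> :: real
  shows "2 * cos (real (k + 3) * \<theta>) = 2 * cos \<theta> * (2 * cos (real (k + 2) * \<theta>)) - 2 * cos (real (k + 1) * \<theta>)"
proof -
  have "cos (real (k + 2) * \<theta> + \<theta>) + cos (real (k + 2) * \<theta> - \<theta>) = 2 * cos (real (k + 2) * \<theta>) * cos \<theta>"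
    by (simp add: cos_add cos_diff)
  moreover have "real (k + 2) * \<theta> + \<theta> = real (k + 3) * \<theta>" "real (k + 2) * \<theta> - \<theta> = real (k + 1) * \<theta>"
    by (simp_all add: algebra_simps)
  ultimately show ?thesis by (simp add: algebra_simps)
qed

lemma cos_rat_false:
  assumes n4: "4 \<le> n" and r: "cos (pi / real n) \<in> \<rat>"
  shows False
proof -
  define \<theta> where "\<theta> = pi / real n"
  have "2 * cos \<theta> \<in> \<rat>" using r unfolding \<theta>_def by simp
  then obtain a b :: int where b0: "b > 0" and cp: "coprime a b" and ab: "2 * cos \<theta> = of_int a / of_int b"
    by (rule Rats_cases')
  have ub: "real_of_int b * (2 * cos \<theta>) = of_int a" using ab b0 by simp
  have P: "\<exists>A1 A2 :: int. real_of_int b ^ (k + 1) * (2 * cos (real (k + 1) * \<theta>)) = of_int (a ^ (k + 1) + b * A1)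
        \<and> real_of_int b ^ (k + 2) * (2 * cos (real (k + 2) * \<theta>)) = of_int (a ^ (k + 2) + b * A2)" for k
  proof (induction k)
    case 0
    have e1: "real_of_int b ^ (0 + 1) * (2 * cos (real (0 + 1) * \<theta>)) = of_int (a ^ (0 + 1) + b * 0)"
      using ub by simp
    have "cos (real (0 + 2) * \<theta>) = 2 * cos \<theta> ^ 2 - 1" using cos_double_cos[of \<theta>] by simp
    then have "real_of_int b ^ (0 + 2) * (2 * cos (real (0 + 2) * \<theta>)) = (real_of_int b * (2 * cos \<theta>))^2 - 2 * real_of_int b ^ 2"
      by (subst \<open>cos (real (0 + 2) * \<theta>) = 2 * cos \<theta> ^ 2 - 1\<close>) (simp add: power2_eq_square algebra_simps)
    also have "\<dots> = of_int (a ^ (0 + 2) + b * (- 2 * b))" using ub by (simp add: power2_eq_square)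
    finally show ?case using e1 by blast
  next
    case (Suc k)
    then obtain A1 A2 :: int where h1: "real_of_int b ^ (k + 1) * (2 * cos (real (k + 1) * \<theta>)) = of_int (a ^ (k + 1) + b * A1)"
      and h2: "real_of_int b ^ (k + 2) * (2 * cos (real (k + 2) * \<theta>)) = of_int (a ^ (k + 2) + b * A2)" by blast
    have "real_of_int b ^ (k + 3) * (2 * cos (real (k + 3) * \<theta>))
        = (real_of_int b * (2 * cos \<theta>)) * (real_of_int b ^ (k + 2) * (2 * cos (real (k + 2) * \<theta>)))
          - real_of_int b ^ 2 * (real_of_int b ^ (k + 1) * (2 * cos (real (k + 1) * \<theta>)))"
      unfolding cheb_step by (simp add: algebra_simps power_add power2_eq_square numeral_3_eq_3)
    also have "\<dots> = of_int (a ^ (k + 3) + b * (a * A2 - b * a ^ (k + 1) - b * b * A1))"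
      unfolding ub h1 h2 by (simp add: algebra_simps power_add power2_eq_square numeral_3_eq_3)
    finally have "real_of_int b ^ (Suc k + 2) * (2 * cos (real (Suc k + 2) * \<theta>)) = of_int (a ^ (Suc k + 2) + b * (a * A2 - b * a ^ (k + 1) - b * b * A1))"
      by (simp add: numeral_3_eq_3)
    moreover have "Suc k + 1 = k + 2" by simp
    ultimately show ?case using h2 by metis
  qed
  obtain A1 A2 :: int where "real_of_int b ^ ((n - 1) + 1) * (2 * cos (real ((n - 1) + 1) * \<theta>)) = of_int (a ^ ((n - 1) + 1) + b * A1)"
    using P by blast
  moreover have "(n - 1) + 1 = n" using n4 by simp
  moreover have "cos (real n * \<theta>) = -1" unfolding \<theta>_def using n4 by simp
  ultimately have "real_of_int b ^ n * (-2) = of_int (a ^ n + b * A1)" by simp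
  then have "- 2 * b ^ n = a ^ n + b * A1"
    by (metis (mono_tags, opaque_lifting) mult.commute of_int_eq_iff of_int_minus of_int_mult of_int_numeral of_int_power)
  then have "a ^ n = b * (- 2 * b ^ (n - 1) - A1)"
    using n4 by (simp add: algebra_simps power_eq_if)
  then have "b dvd a ^ n" by simp
  moreover have "coprime (a ^ n) b" using cp by simp
  ultimately have "\<bar>b\<bar> = 1" using coprime_common_divisor_int[of "a ^ n" b b] by simp
  then have "b = 1" using b0 by simp
  then have u: "2 * cos \<theta> = of_int a" using ab by simp
  have "cos \<theta> > 1/2"
  proof -
    have "cos (pi / 3) < cos \<theta>" unfolding \<theta>_def
      by (rule cos_monotone_0_pi) (use n4 in \<open>auto simp: field_simps\<close>)
    then show ?thesis by (simp add: cos_60)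
  qed
  moreover have "cos \<theta> < 1"
  proof -
    have "cos \<theta> < cos 0" unfolding \<theta>_def
      by (rule cos_monotone_0_pi) (use n4 in \<open>auto simp: field_simps\<close>)
    then show ?thesis by simp
  qed
  ultimately have "1 < a" "a < 2" using u by linarith+
  then show False by simp
qed

lemma ratio_contra:
  assumes n5: "5 \<le> n" and t0: "0 < t"
  and h1: "t * cos (real (1::nat) * pi / real n) = of_int m1 * pi / 4"
  and h2: "t * cos (real (2::nat) * pi / real n) = of_int m2 * pi / 4"
  and hj: "(j = 3 \<or> j = 4)" "t * cos (real j * pi / real n) = of_int mj * pi / 4"
  shows False
proof -
  define \<rho> where "\<rho> = pi / (4 * t)"
  define \<theta> where "\<theta> = pi / real n"
  have \<rho>0: "\<rho> > 0" unfolding \<rho>_def using t0 by simp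
  have cm: "cos (real k * pi / real n) = \<rho> * of_int m" if "t * cos (real k * pi / real n) = of_int m * pi / 4" for k m
    using that t0 unfolding \<rho>_def by (simp add: field_simps)
  have c1: "cos \<theta> = \<rho> * of_int m1" using cm[OF h1] unfolding \<theta>_def by simp
  have c2: "cos (2 * \<theta>) = \<rho> * of_int m2" using cm[OF h2] unfolding \<theta>_def by simp
  have cj: "cos (real j * \<theta>) = \<rho> * of_int mj" using cm[OF hj(2)] unfolding \<theta>_def by simp
  have th: "0 < \<theta>" "2 * \<theta> < pi / 2" unfolding \<theta>_def using n5 by (auto simp: field_simps)
  have pos1: "cos \<theta> > 0" by (rule cos_gt_zero) (use th in auto)
  have pos2: "cos (2 * \<theta>) > 0" by (rule cos_gt_zero) (use th in auto)
  have lt: "cos (2 * \<theta>) < cos \<theta>" by (rule cos_monotone_0_pi) (use th in auto)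
  have im1: "m1 > 0" using pos1 c1 \<rho>0 by (simp add: zero_less_mult_iff)
  have im2: "m2 > 0" using pos2 c2 \<rho>0 by (simp add: zero_less_mult_iff)
  have im12: "m2 < m1" using lt c1 c2 \<rho>0 by simp
  have d2: "cos (2 * \<theta>) = 2 * cos \<theta> ^ 2 - 1" by (rule cos_double_cos)
  have "\<rho> \<in> \<rat>"
  proof (cases "j = 3")
    case True
    have "cos (3 * \<theta>) = 4 * cos \<theta> ^ 3 - 3 * cos \<theta>" by (rule cos_treble_cos)
    then have "\<rho> * of_int mj = 4 * (\<rho> * of_int m1) ^ 3 - 3 * (\<rho> * of_int m1)"
      using cj c1 True by simp
    then have "\<rho> * (of_int mj + 3 * of_int m1) = \<rho> * (4 * \<rho>^2 * of_int m1 ^ 3)"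
      by (simp add: algebra_simps power3_eq_cube power2_eq_square)
    then have "of_int mj + 3 * of_int m1 = 4 * \<rho>^2 * of_int m1 ^ 3"
      using \<rho>0 by simp
    then have r2: "\<rho>^2 = (of_int mj + 3 * of_int m1) / (4 * of_int m1 ^ 3)"
      using im1 by (simp add: field_simps)
    have r2q: "\<rho>^2 \<in> \<rat>" unfolding r2 by (intro Rats_divide Rats_add Rats_mult Rats_power Rats_of_int) simp_all
    have "\<rho> * of_int m2 = 2 * \<rho>^2 * of_int m1 ^ 2 - 1" using d2 c1 c2 by (simp add: power_mult_distrib)
    then have "\<rho> = (2 * \<rho>^2 * of_int m1 ^ 2 - 1) / of_int m2" using im2 by (simp add: field_simps)
    also have "\<dots> \<in> \<rat>"
      by (rule Rats_divide[OF Rats_diff[OF Rats_mult[OF Rats_mult[OF _ r2q] Rats_power[OF Rats_of_int]] Rats_1] Rats_of_int]) simp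
    finally show ?thesis .
  next
    case False
    then have j4: "j = 4" using hj by simp
    have "cos (2 * (2 * \<theta>)) = 2 * cos (2 * \<theta>) ^ 2 - 1" by (rule cos_double_cos)
    then have e4: "\<rho> * of_int mj = 2 * (\<rho> * of_int m2) ^ 2 - 1" using cj c2 j4 by simp
    have e2: "\<rho> * of_int m2 = 2 * (\<rho> * of_int m1) ^ 2 - 1" using d2 c1 c2 by simp
    have key: "\<rho> * (of_int mj * of_int m1 ^ 2 - of_int m2 ^ 3) = of_int m2 ^ 2 - of_int m1 ^ 2"
    proof -
      have "\<rho> * of_int mj * of_int m1 ^ 2 = (2 * (\<rho> * of_int m2) ^ 2 - 1) * of_int m1 ^ 2" using e4 by simp
      moreover have "\<rho> * of_int m2 * of_int m2 ^ 2 = (2 * (\<rho> * of_int m1) ^ 2 - 1) * of_int m2 ^ 2" using e2 by simp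
      ultimately show ?thesis by (simp add: algebra_simps power2_eq_square power3_eq_cube)
    qed
    have "(of_int m2 ^ 2 :: real) \<noteq> of_int m1 ^ 2"
    proof
      assume "(of_int m2 ^ 2 :: real) = of_int m1 ^ 2"
      then have "m2 ^ 2 = m1 ^ 2" by (metis of_int_eq_iff of_int_power)
      then have "m2 = m1" using im1 im2 by (simp add: power2_eq_iff)
      with im12 show False by simp
    qed
    then have nz: "(of_int mj * of_int m1 ^ 2 - of_int m2 ^ 3 :: real) \<noteq> 0" using key by auto
    have "\<rho> = (of_int m2 ^ 2 - of_int m1 ^ 2) / (of_int mj * of_int m1 ^ 2 - of_int m2 ^ 3)"
      using key nz by (simp add: field_simps)
    also have "\<dots> \<in> \<rat>" by (intro Rats_divide Rats_diff Rats_mult Rats_power Rats_of_int)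
    finally show ?thesis .
  qed
  then have "cos \<theta> \<in> \<rat>" unfolding c1 by (intro Rats_mult Rats_of_int)
  then show False using cos_rat_false[of n] n5 unfolding \<theta>_def by simp
qed


lemma edge_norm:
  assumes "path_adj n a b"
  obtains A where "A + 1 < n" "{a, b} = {A, A + 1}" "\<And>f :: nat \<Rightarrow> real. f a + f b = f A + f (A + 1)"
proof (cases "a + 1 = b")
  case True
  then show ?thesis using assms that[of a] by (auto simp: path_adj_def)
next
  case False
  then have "b + 1 = a" using assms by (auto simp: path_adj_def)
  then show ?thesis using assms that[of b] by (auto simp: path_adj_def insert_commute)
qed

lemma ndvd_compl:
  fixes n x k :: nat
  assumes "k \<le> n" "\<not> n dvd x * k"
  shows "\<not> n dvd x * (n - k)"
proof
  assume "n dvd x * (n - k)"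
  moreover have "n dvd x * n" by simp
  ultimately have "n dvd x * n - x * (n - k)" by (rule dvd_diff_nat[rotated])
  moreover have "x * n - x * (n - k) = x * k" using assms(1) by (simp add: diff_mult_distrib2)
  ultimately show False using assms(2) by simp
qed

lemma angle_bounds:
  assumes "0 < X" "X < n"
  shows "0 < real X * pi / real n" "real X * pi / real n < pi"
proof -
  show "0 < real X * pi / real n" using assms by simp
  have "real X * pi < real n * pi" using assms by simp
  then show "real X * pi / real n < pi" using assms by (simp add: field_simps)
qed

lemma only_if:
  assumes n2: "n \<ge> 2" and abcd: "a < n" "b < n" "c < n" "d < n" "a \<noteq> b" "c \<noteq> d"
    "{a, b} \<noteq> {c, d}" "path_adj n a b \<or> path_adj n c d"
  and pst: "plus_pst n (path_adj n) a b c d"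
  shows "n \<in> {3, 4}"
proof (rule ccontr)
  assume nn: "n \<notin> {3, 4}"
  obtain t \<gamma> where t0: "t \<ge> 0" and g1: "cmod \<gamma> = 1" and
    ev: "\<forall>i<n. mat_vec n (mat_exp n (\<lambda>k l. \<i> * of_real t * unsigned_laplacian n (path_adj n) k l))
             (\<lambda>v. basis_vec a v + basis_vec b v) i = \<gamma> * (basis_vec c i + basis_vec d i)"
    using pst unfolding plus_pst_def by blast
  have co: "exp (\<i> * of_real (t * lam n k)) * of_real (wv n k a + wv n k b) = \<gamma> * of_real (wv n k c + wv n k d)" for k
    by (rule pst_coef_path[OF abcd(1-6) ev])
  have n5: "5 \<le> n"
  proof (rule ccontr)
    assume "\<not> 5 \<le> n"
    then have "n = 2" using n2 nn by auto
    then have "{a, b} = {0, 1}" "{c, d} = {0, 1}" using abcd by auto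
    then show False using abcd(7) by simp
  qed
  have Q: "Qf n a b = Qf n c d" by (rule Q_eq[OF abcd(1-4) g1 co])
  have adj: "path_adj n a b" "path_adj n c d"
  proof -
    from abcd(8) show "path_adj n a b"
    proof
      assume "path_adj n c d"
      then have "Qf n c d \<ge> 5" using Qf_val(1)[OF abcd(3,4,6)] n5 by simp
      then show "path_adj n a b" using Qf_val(2)[OF abcd(1,2,5)] n5 Q by force
    qed simp
    from abcd(8) show "path_adj n c d"
    proof
      assume "path_adj n a b"
      then have "Qf n a b \<ge> 5" using Qf_val(1)[OF abcd(1,2,5)] n5 by simp
      then show "path_adj n c d" using Qf_val(2)[OF abcd(3,4,6)] n5 Q by force
    qed simp
  qed
  obtain A where A: "A + 1 < n" "{a, b} = {A, A + 1}" "\<And>f :: nat \<Rightarrow> real. f a + f b = f A + f (A + 1)"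
    using edge_norm[OF adj(1)] by blast
  obtain C where C: "C + 1 < n" "{c, d} = {C, C + 1}" "\<And>f :: nat \<Rightarrow> real. f c + f d = f C + f (C + 1)"
    using edge_norm[OF adj(2)] by blast
  have AC: "A \<noteq> C" using A(2) C(2) abcd(7) by auto
  have co2: "exp (\<i> * of_real (t * lam n k)) * of_real (wv n k A + wv n k (A + 1)) = \<gamma> * of_real (wv n k C + wv n k (C + 1))" for k
    using co[of k] A(3)[of "wv n k"] C(3)[of "wv n k"] by simp
  have n0: "0 < n" using n5 by simp
  have sum: "C + 1 + (A + 1) = n"
  proof -
    have "\<bar>wv n 1 A + wv n 1 (A + 1)\<bar> = \<bar>wv n 1 C + wv n 1 (C + 1)\<bar>"
      by (rule abs_eq_from_coef[OF co2 g1])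
    then have "\<bar>2 * sin (real (A + 1) * pi / real n) * sin (pi / (2 * real n))\<bar>
             = \<bar>2 * sin (real (C + 1) * pi / real n) * sin (pi / (2 * real n))\<bar>"
      using wv_edge[OF n0, of 1 A] wv_edge[OF n0, of 1 C] by (simp add: abs_mult)
    moreover have "sin (pi / (2 * real n)) > 0" using sin_half_pos[of 1 n] n0 by simp
    moreover have "sin (real (A + 1) * pi / real n) > 0" "sin (real (C + 1) * pi / real n) > 0"
      using angle_bounds[of "A + 1" n] angle_bounds[of "C + 1" n] A(1) C(1) by (auto intro!: sin_gt_zero)
    ultimately have "sin (real (A + 1) * pi / real n) = sin (real (C + 1) * pi / real n)"
      by (simp add: abs_mult)
    then have "real (A + 1) * pi / real n = real (C + 1) * pi / real n \<or>
               real (A + 1) * pi / real n + real (C + 1) * pi / real n = pi"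
      by (rule sin_eq_cases[rotated 4]) (use angle_bounds[of "A + 1" n] angle_bounds[of "C + 1" n] A(1) C(1) in auto)
    then show ?thesis
    proof
      assume "real (A + 1) * pi / real n = real (C + 1) * pi / real n"
      then have "A = C" using n0 by (simp add: field_simps)
      with AC show ?thesis by simp
    next
      assume "real (A + 1) * pi / real n + real (C + 1) * pi / real n = pi"
      then have "(real (A + 1) + real (C + 1)) * pi / real n = pi" by (simp add: add_divide_distrib distrib_right)
      then have "(real (A + 1) + real (C + 1)) * pi = real n * pi" using n0 by (simp add: divide_eq_eq)
      then have "real (A + 1) + real (C + 1) = real n" by simp
      then show ?thesis by linarith
    qed
  qed
  define \<sigma> where "\<sigma> = - \<gamma> * (-1)^(A+C)"
  have ph: "exp (\<i> * of_real (t * lam n k)) = \<sigma> * (-1)^k" if "0 < k" "k < 2 * n" "\<not> n dvd (A + 1) * k" for k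
    using phase[OF n0 sum co2 that] unfolding \<sigma>_def by simp
  have s0: "\<sigma> \<noteq> 0" using g1 unfolding \<sigma>_def by auto
  have pr: "\<exists>m::int. t * cos (real k * pi / real n) = of_int m * pi / 4"
    if "0 < k" "k < n" "\<not> n dvd (A + 1) * k" for k
  proof (rule pair_int[OF that(1,2) _ _ s0])
    show "exp (\<i> * of_real (t * lam n k)) = \<sigma> * (-1)^k" by (rule ph) (use that in auto)
    show "exp (\<i> * of_real (t * lam n (n - k))) = \<sigma> * (-1)^(n - k)"
      by (rule ph) (use that ndvd_compl[of k n "A + 1"] in auto)
  qed
  have d1: "\<not> n dvd (A + 1) * 1" using A(1) by (auto dest: dvd_imp_le)
  have d2: "\<not> n dvd (A + 1) * 2"
  proof
    assume "n dvd (A + 1) * 2"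
    then obtain q where q: "(A + 1) * 2 = n * q" by blast
    have "q < 2"
    proof (rule ccontr)
      assume "\<not> q < 2"
      then have "n * 2 \<le> n * q" by simp
      moreover have "n * q = 2 * A + 2" using q by simp
      ultimately show False using A(1) by linarith
    qed
    moreover have "q \<noteq> 0"
    proof
      assume "q = 0"
      then have "(A + 1) * 2 = 0" using q by simp
      then show False by simp
    qed
    ultimately have "(A + 1) * 2 = n" using q by simp
    then show False using sum AC by simp
  qed
  obtain j where j: "j = 3 \<or> j = 4" "\<not> n dvd (A + 1) * j"
  proof -
    have "\<not> (n dvd (A + 1) * 3 \<and> n dvd (A + 1) * 4)"
    proof
      assume "n dvd (A + 1) * 3 \<and> n dvd (A + 1) * 4"
      then have "n dvd (A + 1) * 4 - (A + 1) * 3" by (intro dvd_diff_nat) auto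
      moreover have "(A + 1) * 4 - (A + 1) * 3 = A + 1" by simp
      ultimately have "n dvd A + 1" by metis
      then show False using A(1) by (auto dest: dvd_imp_le)
    qed
    then show ?thesis using that by blast
  qed
  have tpos: "0 < t"
  proof (rule ccontr)
    assume "\<not> 0 < t"
    then have "t = 0" using t0 by simp
    then have "1 = \<sigma> * (-1)" "1 = \<sigma> * 1" using ph[of 1] ph[of 2] d1 d2 n5 by simp_all
    then show False by simp
  qed
  obtain m1 where m1: "t * cos (real (1::nat) * pi / real n) = of_int m1 * pi / 4"
    using pr[of 1] d1 n5 by auto
  obtain m2 where m2: "t * cos (real (2::nat) * pi / real n) = of_int m2 * pi / 4"
    using pr[of 2] d2 n5 by auto
  obtain mj where mj: "t * cos (real j * pi / real n) = of_int mj * pi / 4"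
    using pr[of j] j n5 by auto
  show False by (rule ratio_contra[OF n5 tpos m1 m2 j(1) mj])
qed


lemma exp_path_eig:
  assumes ev: "\<And>i. i < n \<Longrightarrow> (\<Sum>l<n. Lr n i l * v l) = lm * v i" and i: "i < n"
  shows "mat_vec n (mat_exp n (\<lambda>k l. \<i> * of_real t * unsigned_laplacian n (path_adj n) k l)) (\<lambda>j. of_real (v j)) i
         = exp (\<i> * of_real (t * lm)) * of_real (v i)"
proof (rule mat_exp_right_eig[OF _ i])
  fix i assume "i < n"
  have "(\<Sum>l<n. \<i> * of_real t * unsigned_laplacian n (path_adj n) i l * of_real (v l))
      = \<i> * of_real t * of_real (\<Sum>l<n. Lr n i l * v l)"
    by (simp add: ul_Lr sum_distrib_left mult_ac)
  also have "\<dots> = \<i> * of_real (t * lm) * of_real (v i)" using ev[OF \<open>i < n\<close>] by (simp add: mult_ac)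
  finally show "(\<Sum>l<n. \<i> * of_real t * unsigned_laplacian n (path_adj n) i l * of_real (v l))
      = \<i> * of_real (t * lm) * of_real (v i)" .
qed

lemma mat_vec_lin:
  "mat_vec n E (\<lambda>j. f j + g j) i = mat_vec n E f i + mat_vec n E g i"
  "mat_vec n E (\<lambda>j. \<alpha> * f j) i = \<alpha> * mat_vec n E f i"
  by (simp_all add: mat_vec_def sum.distrib distrib_left sum_distrib_left mult_ac)

lemma mat_vec_cong:
  "(\<And>j. j < n \<Longrightarrow> f j = g j) \<Longrightarrow> mat_vec n E f i = mat_vec n E g i"
  by (simp add: mat_vec_def)

lemma exp_i_real: "exp (\<i> * of_real x) = Complex (cos x) (sin x)"
  by (subst cis_conv_exp[symmetric]) (simp add: complex_eq_iff)

lemma exp_ipi2: "exp (\<i> * of_real (pi / 2)) = \<i>"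
  unfolding exp_i_real by (simp add: complex_eq_iff)

lemma exp_i3pi2: "exp (\<i> * of_real (3 * pi / 2)) = - \<i>"
proof -
  have "cos (3 * pi / 2) = 0" "sin (3 * pi / 2) = -1"
    using cos_pi_eq_zero[of 1] sin_cos_eq[of "3 * pi / 2"] 
    by (simp_all add: sin_cos_eq cos_diff cos_add field_simps)
  then show ?thesis unfolding exp_i_real by (simp add: complex_eq_iff)
qed

lemma pst3: "plus_pst 3 (path_adj 3) 0 1 1 2"
proof -
  define t :: real where "t = pi / 2"
  define v1 :: "nat \<Rightarrow> real" where "v1 j = (if j = 0 then 1 else if j = 1 then 0 else -1)" for j
  define v2 :: "nat \<Rightarrow> real" where "v2 j = (if j = 1 then 2 else 1)" for j
  let ?E = "mat_exp 3 (\<lambda>k l. \<i> * of_real t * unsigned_laplacian 3 (path_adj 3) k l)"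
  have ev1: "(\<Sum>l<3. Lr 3 i l * v1 l) = 1 * v1 i" if "i < 3" for i
  proof -
    have "i = 0 \<or> i = 1 \<or> i = 2" using that by auto
    then show ?thesis using that by (auto simp: row_Lr deg_path v1_def)
  qed
  have ev2: "(\<Sum>l<3. Lr 3 i l * v2 l) = 3 * v2 i" if "i < 3" for i
  proof -
    have "i = 0 \<or> i = 1 \<or> i = 2" using that by auto
    then show ?thesis using that by (auto simp: row_Lr deg_path v2_def)
  qed
  have "mat_vec 3 ?E (\<lambda>v. basis_vec 0 v + basis_vec 1 v) i = (- \<i>) * (basis_vec 1 i + basis_vec 2 i)" if "i < 3" for i
  proof -
    have "mat_vec 3 ?E (\<lambda>v. basis_vec 0 v + basis_vec 1 v) i
        = mat_vec 3 ?E (\<lambda>j. (1/2) * of_real (v1 j) + (1/2) * of_real (v2 j)) i"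
    proof (rule mat_vec_cong)
      fix j :: nat assume "j < 3"
      then have "j = 0 \<or> j = 1 \<or> j = 2" by auto
      then show "basis_vec 0 j + basis_vec 1 j = (1/2) * of_real (v1 j) + (1/2) * of_real (v2 j)"
        by (auto simp: basis_vec_def v1_def v2_def)
    qed
    also have "\<dots> = (1/2) * (exp (\<i> * of_real (t * 1)) * of_real (v1 i)) + (1/2) * (exp (\<i> * of_real (t * 3)) * of_real (v2 i))"
      by (simp only: mat_vec_lin exp_path_eig[OF ev1 that] exp_path_eig[OF ev2 that])
    also have "\<dots> = (1/2) * (\<i> * of_real (v1 i)) + (1/2) * ((- \<i>) * of_real (v2 i))"
      using exp_ipi2 exp_i3pi2 unfolding t_def by (simp add: mult.commute)
    also have "\<dots> = (- \<i>) * (basis_vec 1 i + basis_vec 2 i)"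
    proof -
      have "i = 0 \<or> i = 1 \<or> i = 2" using that by auto
      then show ?thesis by (auto simp: basis_vec_def v1_def v2_def field_simps)
    qed
    finally show ?thesis .
  qed
  then show ?thesis unfolding plus_pst_def
    by (intro exI[of _ t] conjI exI[of _ "- \<i>"]) (auto simp: t_def)
qed

lemma exp_shift_pi: "exp (\<i> * of_real (a + pi)) = - exp (\<i> * of_real a)"
  "exp (\<i> * of_real (a - pi)) = - exp (\<i> * of_real a)"
  unfolding exp_i_real by (simp_all add: complex_eq_iff cos_add sin_add cos_diff sin_diff)

lemma pst4: "plus_pst 4 (path_adj 4) 0 1 2 3"
proof -
  define t :: real where "t = pi / sqrt 2"
  define e where "e = exp (\<i> * of_real (sqrt 2 * pi))"
  define vp :: "nat \<Rightarrow> real" where "vp j = (if j = 0 \<or> j = 3 then 1 else 1 + sqrt 2)" for j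
  define vm :: "nat \<Rightarrow> real" where "vm j = (if j = 0 \<or> j = 3 then 1 else 1 - sqrt 2)" for j
  define w2 :: "nat \<Rightarrow> real" where "w2 j = (if j < 2 then 1 else -1)" for j
  let ?E = "mat_exp 4 (\<lambda>k l. \<i> * of_real t * unsigned_laplacian 4 (path_adj 4) k l)"
  have s2: "sqrt 2 * sqrt 2 = (2::real)" by simp
  have i4: "i = 0 \<or> i = 1 \<or> i = 2 \<or> i = 3" if "i < 4" for i :: nat using that by auto
  have evp: "(\<Sum>l<4. Lr 4 i l * vp l) = (2 + sqrt 2) * vp i" if "i < 4" for i
    using i4[OF that] that by (auto simp: row_Lr deg_path vp_def algebra_simps s2)
  have evm: "(\<Sum>l<4. Lr 4 i l * vm l) = (2 - sqrt 2) * vm i" if "i < 4" for i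
    using i4[OF that] that by (auto simp: row_Lr deg_path vm_def algebra_simps s2)
  have ev2: "(\<Sum>l<4. Lr 4 i l * w2 l) = 2 * w2 i" if "i < 4" for i
    using i4[OF that] that by (auto simp: row_Lr deg_path w2_def)
  have t1: "t * (2 + sqrt 2) = sqrt 2 * pi + pi" and t2: "t * 2 = sqrt 2 * pi"
    and t3: "t * (2 - sqrt 2) = sqrt 2 * pi - pi"
    unfolding t_def by (simp_all add: field_simps s2)
  have "mat_vec 4 ?E (\<lambda>v. basis_vec 0 v + basis_vec 1 v) i = (- e) * (basis_vec 2 i + basis_vec 3 i)" if "i < 4" for i
  proof -
    have "mat_vec 4 ?E (\<lambda>v. basis_vec 0 v + basis_vec 1 v) i
        = mat_vec 4 ?E (\<lambda>j. (1/2) * of_real (w2 j) + ((1/4) * of_real (vp j) + (1/4) * of_real (vm j))) i"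
    proof (rule mat_vec_cong)
      fix j :: nat assume "j < 4"
      then show "basis_vec 0 j + basis_vec 1 j = (1/2) * of_real (w2 j) + ((1/4) * of_real (vp j) + (1/4) * of_real (vm j))"
        using i4[of j] by (auto simp: basis_vec_def w2_def vp_def vm_def field_simps)
    qed
    also have "\<dots> = (1/2) * (exp (\<i> * of_real (t * 2)) * of_real (w2 i))
        + ((1/4) * (exp (\<i> * of_real (t * (2 + sqrt 2))) * of_real (vp i))
        + (1/4) * (exp (\<i> * of_real (t * (2 - sqrt 2))) * of_real (vm i)))"
      by (simp only: mat_vec_lin exp_path_eig[OF ev2 that] exp_path_eig[OF evp that] exp_path_eig[OF evm that])
    also have "\<dots> = e * ((1/2) * of_real (w2 i) - (1/4) * of_real (vp i) - (1/4) * of_real (vm i))"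
      unfolding t1 t2 t3 exp_shift_pi e_def by (simp add: algebra_simps)
    also have "\<dots> = (- e) * (basis_vec 2 i + basis_vec 3 i)"
      using i4[OF that] by (auto simp: basis_vec_def w2_def vp_def vm_def field_simps)
    finally show ?thesis .
  qed
  moreover have "cmod (- e) = 1" unfolding e_def exp_i_real by (simp add: cmod_def)
  ultimately show ?thesis unfolding plus_pst_def
    by (intro exI[of _ t] conjI exI[of _ "- e"]) (auto simp: t_def)
qed

theorem mainTheorem19:
  fixes n :: nat
  assumes "n \<ge> 2"
  shows "(\<exists>a b c d. a < n \<and> b < n \<and> c < n \<and> d < n \<and> a \<noteq> b \<and> c \<noteq> d
            \<and> {a, b} \<noteq> {c, d}
            \<and> (path_adj n a b \<or> path_adj n c d)
            \<and> plus_pst n (path_adj n) a b c d)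
         \<longleftrightarrow> n \<in> {3, 4}"
proof
  assume "\<exists>a b c d. a < n \<and> b < n \<and> c < n \<and> d < n \<and> a \<noteq> b \<and> c \<noteq> d
            \<and> {a, b} \<noteq> {c, d}
            \<and> (path_adj n a b \<or> path_adj n c d)
            \<and> plus_pst n (path_adj n) a b c d"
  then obtain a b c d where "a < n" "b < n" "c < n" "d < n" "a \<noteq> b" "c \<noteq> d"
     "{a, b} \<noteq> {c, d}" "path_adj n a b \<or> path_adj n c d" "plus_pst n (path_adj n) a b c d"
    by blast
  then show "n \<in> {3, 4}" using only_if[OF assms] by blast
next
  assume "n \<in> {3, 4}"
  then show "\<exists>a b c d. a < n \<and> b < n \<and> c < n \<and> d < n \<and> a \<noteq> b \<and> c \<noteq> d
            \<and> {a, b} \<noteq> {c, d}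
            \<and> (path_adj n a b \<or> path_adj n c d)
            \<and> plus_pst n (path_adj n) a b c d"
  proof
    assume n3: "n = 3"
    have ne: "{0::nat, 1} \<noteq> {1, 2}"
    proof
      assume "{0::nat, 1} = {1, 2}"
      then have "(0::nat) \<in> {1, 2}" by (metis insertI1)
      then show False by simp
    qed
    have "path_adj 3 0 1" by (simp add: path_adj_def)
    then show ?thesis unfolding n3 using pst3 ne
      by (intro exI[of _ 0] exI[of _ 1] exI[of _ 1] exI[of _ 2] conjI) simp_all
  next
    assume "n \<in> {4}"
    then have n4: "n = 4" by simp
    have ne: "{0::nat, 1} \<noteq> {2, 3}"
    proof
      assume "{0::nat, 1} = {2, 3}"
      then have "(0::nat) \<in> {2, 3}" by (metis insertI1)
      then show False by simp
    qed
    have "path_adj 4 0 1" by (simp add: path_adj_def)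
    then show ?thesis unfolding n4 using pst4 ne
      by (intro exI[of _ 0] exI[of _ 1] exI[of _ 2] exI[of _ 3] conjI) simp_all
  qed
qed

end
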